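(* Let $\{a_k\}_{k\in\mathbb Z}$ be a sequence of real numbers with $a_k=0$ for all $k\le0$, such that $\{a_k\}_{k\ge1}\in\mathrm{GM}$ and $\lim_{k\to\infty}a_k=0$. Then $\{a_k\}_{k\in\mathbb Z}\in\overline{\mathrm{GM}}$.
   Context: A sequence $\{a_k\}_{k\ge1}$ belongs to $\mathrm{GM}$ if there exist $C>0$ and $\lambda>1$ such that for every $n\ge1$, $\sum_{k=n}^{2n}|a_k-a_{k+1}|\le\frac Cn\sum_{n/\lambda\le k\le\lambda n}|a_k|$. For a two-sided sequence $a$: $|\Delta a_k|=|a_k-a_{k+1}|$ for $k>0$, $|\Delta a_k|=|a_k-a_{k-1}|$ for $k<0$, $|\Delta a_0|=|a_0-a_1|+|a_0-a_{-1}|$; for $k\ge0$, $\widehat a_{2^k}=\sup_{2^k\le|m|<2^{k+1}}\frac1{|m|+1}|\sum_{j=0}^ma_j|$, where for $m<0$, $\sum_{j=0}^ma_j$ means $\sum_{j=m}^0a_j$; $[\cdot]$ is the floor function. The sequence $a$ belongs to $\overline{\mathrm{GM}}$ if there is $C'>0$ such that for every $n\ge0$, $\sum_{[2^{n-1}]\le|m|<2^n}|\Delta a_m|\le C'\sup_{k\in\mathbb N_0}\min(1,2^{k-n})\widehat a_{2^k}$. *)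

theory Defs
  imports "HOL-Analysis.Analysis"
begin

text \<open>One-sided sequences are indexed by nat; only indices k \<ge> 1 are used.\<close>
definition GM :: "(nat \<Rightarrow> real) \<Rightarrow> bool" where
  "GM a \<longleftrightarrow> (\<exists>C>0. \<exists>L>1. \<forall>n\<ge>1.
     (\<Sum>k=n..2*n. \<bar>a k - a (k+1)\<bar>)
       \<le> C / real n * (\<Sum>k\<in>{k. 1 \<le> k \<and> real n / L \<le> real k \<and> real k \<le> L * real n}. \<bar>a k\<bar>))"

definition Delta_abs :: "(int \<Rightarrow> real) \<Rightarrow> int \<Rightarrow> real" where
  "Delta_abs a k =
     (if k > 0 then \<bar>a k - a (k+1)\<bar>
      else if k < 0 then \<bar>a k - a (k-1)\<bar>
      else \<bar>a 0 - a 1\<bar> + \<bar>a 0 - a (-1)\<bar>)"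

definition partial_sum :: "(int \<Rightarrow> real) \<Rightarrow> int \<Rightarrow> real" where
  "partial_sum a m = (if m \<ge> 0 then (\<Sum>j=0..m. a j) else (\<Sum>j=m..0. a j))"

text \<open>hat a_{2^k}\<close>
definition hat_a :: "(int \<Rightarrow> real) \<Rightarrow> nat \<Rightarrow> real" where
  "hat_a a k = Sup ((\<lambda>m. \<bar>partial_sum a m\<bar> / (real_of_int \<bar>m\<bar> + 1))
                     ` {m::int. 2^k \<le> \<bar>m\<bar> \<and> \<bar>m\<bar> < 2^(k+1)})"

text \<open>The supremum on the right may be +\<infinity>; it is taken in the extended reals.\<close>
definition GM_bar :: "(int \<Rightarrow> real) \<Rightarrow> bool" where
  "GM_bar a \<longleftrightarrow> (\<exists>C'>0. \<forall>n::nat.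
     ereal (\<Sum>m\<in>{m::int. \<lfloor>2 powr (real n - 1)\<rfloor> \<le> \<bar>m\<bar> \<and> \<bar>m\<bar> < 2^n}. Delta_abs a m)
       \<le> ereal C' * (SUP k::nat. ereal (min 1 (2 powr (real k - real n)) * hat_a a k)))"

end

theory Submission
  imports Defs
begin


lemma tele_bound:
  fixes b :: "nat \<Rightarrow> real"
  assumes "i \<le> j"
  shows "\<bar>b i - b j\<bar> \<le> (\<Sum>k\<in>{i..<j}. \<bar>b k - b (Suc k)\<bar>)"
  using assms
proof (induction j)
  case 0 then show ?case by simp
next
  case (Suc j)
  show ?case
  proof (cases "i = Suc j")
    case True then show ?thesis by simp
  next
    case False
    then have ij: "i \<le> j" using Suc.prems by simp
    have "\<bar>b i - b (Suc j)\<bar> \<le> \<bar>b i - b j\<bar> + \<bar>b j - b (Suc j)\<bar>" by linarith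
    also have "\<dots> \<le> (\<Sum>k\<in>{i..<j}. \<bar>b k - b (Suc k)\<bar>) + \<bar>b j - b (Suc j)\<bar>"
      using Suc.IH[OF ij] by linarith
    also have "\<dots> = (\<Sum>k\<in>{i..<Suc j}. \<bar>b k - b (Suc k)\<bar>)" using ij by simp
    finally show ?thesis .
  qed
qed

lemma tele_bound2:
  fixes b :: "nat \<Rightarrow> real"
  assumes "i \<in> {u..<u+h}" "j \<in> {u..<u+h}"
  shows "\<bar>b i - b j\<bar> \<le> (\<Sum>k\<in>{u..<u+h}. \<bar>b k - b (Suc k)\<bar>)"
proof -
  have sub: "(\<Sum>k\<in>{x..<y}. \<bar>b k - b (Suc k)\<bar>) \<le> (\<Sum>k\<in>{u..<u+h}. \<bar>b k - b (Suc k)\<bar>)"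
    if "u \<le> x" "y \<le> u + h" for x y
    by (rule sum_mono2) (use that in auto)
  show ?thesis
  proof (cases "i \<le> j")
    case True
    then show ?thesis using tele_bound[OF True, of b] sub[of i j] assms by auto
  next
    case False
    then have ji: "j \<le> i" by simp
    then show ?thesis using tele_bound[OF ji, of b] sub[of j i] assms by (auto simp: abs_minus_commute)
  qed
qed

lemma sub_block:
  fixes b :: "nat \<Rightarrow> real"
  assumes h: "h \<ge> 1"
  shows "(\<Sum>i\<in>{u..<u+h}. \<bar>b i\<bar>) \<le> \<bar>\<Sum>i\<in>{u..<u+h}. b i\<bar> + h * (\<Sum>k\<in>{u..<u+h}. \<bar>b k - b (Suc k)\<bar>)"
proof -
  let ?I = "{u..<u+h}"
  let ?V = "(\<Sum>k\<in>?I. \<bar>b k - b (Suc k)\<bar>)"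
  have hpos: "real h > 0" using h by simp
  have pt: "real h * \<bar>b i\<bar> \<le> \<bar>\<Sum>j\<in>?I. b j\<bar> + real h * ?V" if i: "i \<in> ?I" for i
  proof -
    have "real h * \<bar>b i\<bar> = \<bar>\<Sum>j\<in>?I. b i\<bar>" by (simp add: abs_mult)
    also have "(\<Sum>j\<in>?I. b i) = (\<Sum>j\<in>?I. b j) + (\<Sum>j\<in>?I. b i - b j)"
      by (simp add: sum_subtractf)
    also have "\<bar>\<dots>\<bar> \<le> \<bar>\<Sum>j\<in>?I. b j\<bar> + \<bar>\<Sum>j\<in>?I. b i - b j\<bar>" by (rule abs_triangle_ineq)
    also have "\<bar>\<Sum>j\<in>?I. b i - b j\<bar> \<le> (\<Sum>j\<in>?I. \<bar>b i - b j\<bar>)" by (rule sum_abs)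
    also have "\<dots> \<le> (\<Sum>j\<in>?I. ?V)" by (rule sum_mono) (use tele_bound2 i in auto)
    also have "\<dots> = real h * ?V" by simp
    finally show ?thesis by linarith
  qed
  have "real h * (\<Sum>i\<in>?I. \<bar>b i\<bar>) = (\<Sum>i\<in>?I. real h * \<bar>b i\<bar>)" by (simp add: sum_distrib_left)
  also have "\<dots> \<le> (\<Sum>i\<in>?I. \<bar>\<Sum>j\<in>?I. b j\<bar> + real h * ?V)" by (rule sum_mono) (use pt in auto)
  also have "\<dots> = real h * (\<bar>\<Sum>j\<in>?I. b j\<bar> + real h * ?V)" by simp
  finally show ?thesis using hpos by (simp add: mult_le_cancel_left_pos)
qed

lemma interval_sum_diff:
  fixes b :: "nat \<Rightarrow> real"
  assumes "v \<le> w"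
  shows "(\<Sum>i\<in>{v..<w}. b i) = (\<Sum>j<w. b j) - (\<Sum>j<v. b j)"
  using sum.atLeastLessThan_concat[of 0 v w b] assms by (simp add: atLeast0LessThan)

lemma chain_block:
  fixes b :: "nat \<Rightarrow> real"
  assumes h: "h \<ge> 1"
    and T: "\<And>m. m \<le> u + p*h \<Longrightarrow> \<bar>\<Sum>j<m. b j\<bar> \<le> K"
  shows "(\<Sum>i\<in>{u..<u+p*h}. \<bar>b i\<bar>) \<le> 2*p*K + h*(\<Sum>k\<in>{u..<u+p*h}. \<bar>b k - b (Suc k)\<bar>)"
  using T
proof (induction p)
  case 0 then show ?case by simp
next
  case (Suc p)
  let ?v = "u + p*h"
  have T': "\<bar>\<Sum>j<m. b j\<bar> \<le> K" if "m \<le> u + p*h" for m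
    using Suc.prems[of m] that by simp
  note IH = Suc.IH[OF T']
  have sp: "u + Suc p * h = ?v + h" by simp
  have split1: "(\<Sum>i\<in>{u..<u+Suc p*h}. f i) = (\<Sum>i\<in>{u..<?v}. f i) + (\<Sum>i\<in>{?v..<?v+h}. f i)" for f :: "nat \<Rightarrow> real"
    unfolding sp by (rule sum.atLeastLessThan_concat[symmetric]) auto
  have "\<bar>\<Sum>i\<in>{?v..<?v+h}. b i\<bar> = \<bar>(\<Sum>j<?v+h. b j) - (\<Sum>j<?v. b j)\<bar>"
    by (subst interval_sum_diff) auto
  also have "\<dots> \<le> \<bar>\<Sum>j<?v+h. b j\<bar> + \<bar>\<Sum>j<?v. b j\<bar>" by (rule abs_triangle_ineq4)
  also have "\<dots> \<le> 2*K" using Suc.prems[of "?v+h"] Suc.prems[of ?v] by simp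
  finally have blk: "\<bar>\<Sum>i\<in>{?v..<?v+h}. b i\<bar> \<le> 2*K" .
  note SB = sub_block[OF h, of b ?v]
  show ?case
    unfolding split1 using IH SB blk by (simp add: algebra_simps)
qed

lemma crude_block:
  fixes b :: "nat \<Rightarrow> real"
  assumes T: "\<And>m. m \<le> u + p \<Longrightarrow> \<bar>\<Sum>j<m. b j\<bar> \<le> K"
  shows "(\<Sum>i\<in>{u..<u+p}. \<bar>b i\<bar>) \<le> 2*p*K"
proof -
  have "\<bar>b i\<bar> \<le> 2*K" if "i \<in> {u..<u+p}" for i
  proof -
    have "b i = (\<Sum>j<Suc i. b j) - (\<Sum>j<i. b j)" by simp
    then have "\<bar>b i\<bar> \<le> \<bar>\<Sum>j<Suc i. b j\<bar> + \<bar>\<Sum>j<i. b j\<bar>" by linarith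
    also have "\<dots> \<le> 2*K" using T[of "Suc i"] T[of i] that by simp
    finally show ?thesis .
  qed
  then have "(\<Sum>i\<in>{u..<u+p}. \<bar>b i\<bar>) \<le> (\<Sum>i\<in>{u..<u+p}. 2*K)" by (rule sum_mono)
  then show ?thesis by simp
qed

lemma dyadic_decomp:
  fixes f :: "nat \<Rightarrow> real"
  assumes "a \<le> c"
  shows "(\<Sum>k\<in>{2^a..<2^c}. f k) = (\<Sum>s\<in>{a..<c}. \<Sum>k\<in>{2^s..<2^(Suc s)}. f k)"
  using assms
proof (induction c)
  case 0 then show ?case by simp
next
  case (Suc c)
  show ?case
  proof (cases "a = Suc c")
    case True then show ?thesis by simp
  next
    case False
    then have ac: "a \<le> c" using Suc.prems by simp
    have "(\<Sum>k\<in>{2^a..<2^Suc c}. f k) = (\<Sum>k\<in>{2^a..<2^c}. f k) + (\<Sum>k\<in>{2^c..<2^Suc c}. f k)"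
      by (rule sum.atLeastLessThan_concat[symmetric]) (use ac in \<open>auto simp: power_increasing\<close>)
    then show ?thesis using Suc.IH[OF ac] ac by simp
  qed
qed

lemma core:
  fixes b :: "nat \<Rightarrow> real" and B C R :: real and P q t0 :: nat
  assumes bnd: "\<And>k. \<bar>b k\<bar> \<le> B"
    and gm: "\<And>t. (\<Sum>k\<in>{2^t..<2^(Suc t)}. \<bar>b k - b (Suc k)\<bar>)
              \<le> C / 2^t * (\<Sum>s\<in>{t-P..<t+P+1}. \<Sum>k\<in>{2^s..<2^(Suc s)}. \<bar>b k\<bar>)"
    and C0: "C \<ge> 0"
    and qa: "2*C*(2*P+1)*4^P \<le> 2^q"
    and Tb: "\<And>m. \<bar>\<Sum>j<m. b j\<bar> \<le> R * (m + 2^t0)"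
  shows "(\<Sum>k\<in>{2^t0..<2^(Suc t0)}. \<bar>b k - b (Suc k)\<bar>) \<le> C*(2*P+1)*4^P * (12 * 2^q * R)"
proof -
  define A where "A s = (\<Sum>k\<in>{2^s..<2^(Suc s)}. \<bar>b k\<bar>)" for s :: nat
  define V where "V t = (\<Sum>k\<in>{2^t..<2^(Suc t)}. \<bar>b k - b (Suc k)\<bar>)" for t :: nat
  define d where "d s = (s - t0) + (t0 - s)" for s :: nat
  define Cc where "Cc = C*(2*P+1)*4^P"
  define g where "g s = A s / (2^s * 2^(d s))" for s
  define M where "M = (SUP s. g s)"
  have Cc0: "0 \<le> Cc" unfolding Cc_def using C0 by simp
  have A0: "0 \<le> A s" for s unfolding A_def by (simp add: sum_nonneg)
  have AB: "A s \<le> 2^s * B" for s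
  proof -
    have "A s \<le> (\<Sum>k\<in>{(2::nat)^s..<2^(Suc s)}. B)" unfolding A_def by (rule sum_mono) (use bnd in auto)
    also have "\<dots> = 2^s * B" by simp
    finally show ?thesis .
  qed
  have gB: "g s \<le> B" for s
  proof -
    have "g s \<le> A s / 2^s" unfolding g_def
      by (rule divide_left_mono) (use A0 in auto)
    also have "\<dots> \<le> B" using AB[of s] by (simp add: pos_divide_le_eq mult.commute)
    finally show ?thesis .
  qed
  have bdd: "bdd_above (range g)" by (rule bdd_aboveI2[of _ _ B]) (use gB in auto)
  have gM: "g s \<le> M" for s unfolding M_def by (rule cSUP_upper[OF _ bdd]) simp
  have AM: "A s \<le> M * 2^s * 2^(d s)" for s
    using gM[of s] unfolding g_def by (simp add: pos_divide_le_eq mult.assoc)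
  have M0: "0 \<le> M"
  proof -
    have "0 \<le> g 0" unfolding g_def using A0[of 0] by simp
    then show ?thesis using gM[of 0] by linarith
  qed
  have R0: "0 \<le> R"
  proof -
    have "0 \<le> R * 2^t0" using Tb[of 0] by simp
    moreover have "(0::real) < 2^t0" by simp
    ultimately show ?thesis by (simp add: zero_le_mult_iff)
  qed
  have Vb: "V t \<le> Cc * M * 2^(d t)" for t
  proof -
    have each: "A s \<le> M * 2^(t+P) * 2^(d t + P)" if "s \<in> {t-P..<t+P+1}" for s
    proof -
      have "s \<le> t+P" "d s \<le> d t + P" using that by (auto simp: d_def)
      then have "(2::real)^s \<le> 2^(t+P)" "(2::real)^(d s) \<le> 2^(d t + P)" by (simp_all add: power_increasing)
      then have "M * 2^s * 2^(d s) \<le> M * 2^(t+P) * 2^(d t + P)"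
        using M0 by (simp add: mult_mono mult_left_mono)
      then show ?thesis using AM[of s] by linarith
    qed
    have "(\<Sum>s\<in>{t-P..<t+P+1}. A s) \<le> (\<Sum>s\<in>{t-P..<t+P+1}. M * 2^(t+P) * 2^(d t + P))"
      by (rule sum_mono) (use each in auto)
    also have "\<dots> = card {t-P..<t+P+1} * (M * 2^(t+P) * 2^(d t + P))" by simp
    also have "\<dots> \<le> (2*P+1) * (M * 2^(t+P) * 2^(d t + P))"
      by (rule mult_right_mono) (use M0 in auto)
    finally have S: "(\<Sum>s\<in>{t-P..<t+P+1}. A s) \<le> (2*P+1) * (M * 2^(t+P) * 2^(d t + P))" .
    have "V t \<le> C / 2^t * (\<Sum>s\<in>{t-P..<t+P+1}. A s)" using gm[of t] unfolding V_def A_def by simp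
    also have "\<dots> \<le> C / 2^t * ((2*P+1) * (M * 2^(t+P) * 2^(d t + P)))"
      by (rule mult_left_mono[OF S]) (use C0 in simp)
    also have "\<dots> = Cc * M * 2^(d t)"
    proof -
      have f4: "(4::real)^P = 2^P*2^P" by (simp add: power_mult_distrib[symmetric])
      show ?thesis unfolding Cc_def f4 by (simp add: power_add field_simps)
    qed
    finally show ?thesis .
  qed
  have Tm: "\<bar>\<Sum>j<m. b j\<bar> \<le> 3*R*2^t*2^(d t)" if "m \<le> 2^(Suc t)" for m t
  proof -
    have "t0 \<le> t + d t" by (simp add: d_def)
    then have "(2::real)^t0 \<le> 2^(t + d t)" by (simp add: power_increasing)
    then have e1: "(2::real)^t0 \<le> 2^t * 2^(d t)" by (simp add: power_add)
    have "(1::real) \<le> 2^(d t)" by simp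
    then have e2: "2 * (2::real)^t \<le> 2 * 2^t * 2^(d t)" by simp
    have "real m \<le> 2^(Suc t)" using that by (metis of_nat_le_iff of_nat_numeral of_nat_power)
    then have e3: "real m \<le> 2 * 2^t" by simp
    have e4: "real m + 2^t0 \<le> 3 * 2^t * 2^(d t)" using e1 e2 e3 by linarith
    have "\<bar>\<Sum>j<m. b j\<bar> \<le> R * (m + 2^t0)" by (rule Tb)
    also have "\<dots> \<le> R * (3 * 2^t * 2^(d t))"
      by (rule mult_left_mono) (use e4 R0 in auto)
    finally show ?thesis by simp
  qed
  have Ab: "A t \<le> (6*2^q*R + M/2) * 2^t * 2^(d t)" for t
  proof (cases "q \<le> t")
    case True
    have pw: "(2::nat)^q * 2^(t-q) = 2^t" using True by (simp add: power_add[symmetric])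
    have pwr: "(2::real)^q * 2^(t-q) = 2^t" using True by (simp add: power_add[symmetric])
    have eq: "{(2::nat)^t..<2^(Suc t)} = {2^t..<2^t + 2^q * 2^(t-q)}" using pw by (simp add: mult_2)
    define K where "K = 3*R*2^t*2^(d t)"
    have cb: "(\<Sum>i\<in>{2^t..<2^t + 2^q*2^(t-q)}. \<bar>b i\<bar>) \<le> 2*real (2^q)*K
        + real (2^(t-q))*(\<Sum>k\<in>{2^t..<2^t + 2^q*2^(t-q)}. \<bar>b k - b (Suc k)\<bar>)"
    proof (rule chain_block)
      show "1 \<le> (2::nat)^(t-q)" by simp
      fix m :: nat assume "m \<le> 2^t + 2^q*2^(t-q)"
      then have "m \<le> 2^(Suc t)" using pw by simp
      then show "\<bar>\<Sum>j<m. b j\<bar> \<le> K" unfolding K_def by (rule Tm)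
    qed
    have s1: "A t \<le> 2 * 2^q * K + 2^(t-q) * V t"
      unfolding A_def V_def eq using cb by simp
    have s2: "2^(t-q) * V t \<le> 2^(t-q) * (Cc * M * 2^(d t))"
      by (rule mult_left_mono[OF Vb]) simp
    have s3: "2^(t-q) * (Cc * M * 2^(d t)) \<le> M/2 * 2^t * 2^(d t)"
    proof -
      have "2 * Cc \<le> 2^q" using qa unfolding Cc_def by simp
      then have "2^(t-q) * (2 * Cc) \<le> (2::real)^(t-q) * 2^q" by (rule mult_left_mono) simp
      then have "2^(t-q) * Cc \<le> (2::real)^t / 2" using pwr by (simp add: algebra_simps)
      then have "2^(t-q) * Cc * (M * 2^(d t)) \<le> (2::real)^t / 2 * (M * 2^(d t))"
        by (rule mult_right_mono) (use M0 in simp)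
      then show ?thesis by (simp add: algebra_simps)
    qed
    have "A t \<le> 2 * 2^q * K + M/2 * 2^t * 2^(d t)" using s1 s2 s3 by linarith
    moreover have "2 * 2^q * K + M/2 * 2^t * 2^(d t) = (6*2^q*R + M/2) * 2^t * 2^(d t)"
      unfolding K_def by (simp add: distrib_right)
    ultimately show ?thesis by linarith
  next
    case False
    define K where "K = 3*R*2^t*2^(d t)"
    have cr: "(\<Sum>i\<in>{2^t..<2^t + 2^t}. \<bar>b i\<bar>) \<le> 2*real (2^t)*K"
    proof (rule crude_block)
      fix m :: nat assume "m \<le> 2^t + 2^t"
      then have "m \<le> 2^(Suc t)" by simp
      then show "\<bar>\<Sum>j<m. b j\<bar> \<le> K" unfolding K_def by (rule Tm)
    qed
    have eq: "{(2::nat)^t..<2^(Suc t)} = {2^t..<2^t + 2^t}" by (simp add: mult_2)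
    have c1: "A t \<le> 2 * 2^t * K" unfolding A_def eq using cr by simp
    have K0: "0 \<le> K" unfolding K_def using R0 by simp
    have "(2::real)^t \<le> 2^q" using False by (simp add: power_increasing)
    then have c2: "2 * 2^t * K \<le> 2 * 2^q * K" using K0 by (simp add: mult_right_mono)
    have c3: "0 \<le> M/2 * 2^t * 2^(d t)" using M0 by simp
    have c4: "2 * 2^q * K + M/2 * 2^t * 2^(d t) = (6*2^q*R + M/2) * 2^t * 2^(d t)"
      unfolding K_def by (simp add: distrib_right)
    show ?thesis using c1 c2 c3 c4 by linarith
  qed
  have "(SUP s. g s) \<le> 6*2^q*R + M/2"
  proof (rule cSUP_least)
    fix s
    show "g s \<le> 6*2^q*R + M/2" unfolding g_def using Ab[of s]
      by (simp add: pos_divide_le_eq mult.assoc)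
  qed simp
  then have "M \<le> 6*2^q*R + M/2" using M_def by simp
  then have M12: "M \<le> 12 * 2^q * R" by simp
  have "(\<Sum>k\<in>{2^t0..<2^(Suc t0)}. \<bar>b k - b (Suc k)\<bar>) = V t0" unfolding V_def by simp
  also have "\<dots> \<le> Cc * M" using Vb[of t0] by (simp add: d_def)
  also have "\<dots> \<le> Cc * (12 * 2^q * R)" by (rule mult_left_mono[OF M12 Cc0])
  finally show ?thesis unfolding Cc_def .
qed



lemma ps_eq:
  fixes a :: "int \<Rightarrow> real"
  shows "partial_sum a (int m) = (\<Sum>j<Suc m. a (int j))"
proof -
  have "partial_sum a (int m) = (\<Sum>j\<in>{0..int m}. a j)" unfolding partial_sum_def by simp
  also have "{0..int m} = int ` {0..m}" by (simp add: image_int_atLeastAtMost)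
  also have "(\<Sum>j\<in>int ` {0..m}. a j) = (\<Sum>j\<in>{0..m}. a (int j))"
    by (subst sum.reindex) auto
  also have "{0..m} = {..<Suc m}" by auto
  finally show ?thesis .
qed

lemma hat_lower:
  fixes a :: "int \<Rightarrow> real" and m :: int
  assumes "2^k \<le> \<bar>m\<bar>" "\<bar>m\<bar> < 2^(k+1)"
  shows "\<bar>partial_sum a m\<bar> / (real_of_int \<bar>m\<bar> + 1) \<le> hat_a a k"
proof -
  let ?X = "{m::int. 2^k \<le> \<bar>m\<bar> \<and> \<bar>m\<bar> < 2^(k+1)}"
  have sub: "?X \<subseteq> {-(2^(k+1))..2^(k+1)}"
  proof
    fix m :: int assume "m \<in> ?X"
    then have "\<bar>m\<bar> < 2^(k+1)" by blast
    then show "m \<in> {-(2^(k+1))..2^(k+1)}" by (simp only: atLeastAtMost_iff abs_less_iff) linarith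
  qed
  have fin: "finite ?X" by (rule finite_subset[OF sub]) (rule finite_atLeastAtMost_int)
  let ?f = "\<lambda>m. \<bar>partial_sum a m\<bar> / (real_of_int \<bar>m\<bar> + 1)"
  have mX: "m \<in> ?X" using assms by blast
  have mem: "?f m \<in> ?f ` ?X" by (rule imageI[OF mX])
  have bdd: "bdd_above (?f ` ?X)" by (rule bdd_above_finite) (rule finite_imageI[OF fin])
  show ?thesis unfolding hat_a_def by (rule cSup_upper[OF mem bdd])
qed

lemma hat_nonneg: "0 \<le> hat_a a k"
proof -
  have "0 \<le> \<bar>partial_sum a (2^k)\<bar> / (real_of_int \<bar>2^k\<bar> + 1)" by simp
  also have "\<dots> \<le> hat_a a k" by (rule hat_lower) auto
  finally show ?thesis .
qed

lemma target_conv: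
  fixes a :: "int \<Rightarrow> real" and N1 N2 :: nat
  assumes z: "\<And>k. k \<le> 0 \<Longrightarrow> a k = 0" and N1: "N1 \<ge> 1"
  shows "(\<Sum>m\<in>{m::int. int N1 \<le> \<bar>m\<bar> \<and> \<bar>m\<bar> < int N2}. Delta_abs a m)
       = (\<Sum>k\<in>{N1..<N2}. \<bar>a (int k) - a (int (Suc k))\<bar>)"
proof -
  let ?X = "{m::int. int N1 \<le> \<bar>m\<bar> \<and> \<bar>m\<bar> < int N2}"
  let ?Y = "int ` {N1..<N2}"
  have "?X \<subseteq> {-int N2..int N2}" by auto
  then have fin: "finite ?X" by (rule finite_subset) simp
  have sub: "?Y \<subseteq> ?X" by auto
  have zero: "\<forall>x\<in>?X - ?Y. Delta_abs a x = 0"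
  proof
    fix x assume x: "x \<in> ?X - ?Y"
    have "\<not> x > 0"
    proof
      assume "x > 0"
      then have "x = int (nat x)" by simp
      moreover have "nat x \<in> {N1..<N2}" using x \<open>x > 0\<close> by auto
      ultimately have "x \<in> ?Y" by blast
      then show False using x by blast
    qed
    moreover have "x \<noteq> 0" using x N1 by auto
    ultimately have "x < 0" by simp
    then show "Delta_abs a x = 0" unfolding Delta_abs_def using z[of x] z[of "x-1"] by simp
  qed
  have "(\<Sum>m\<in>?X. Delta_abs a m) = (\<Sum>m\<in>?Y. Delta_abs a m)"
    by (rule sum.mono_neutral_right[OF fin sub zero])
  also have "\<dots> = (\<Sum>k\<in>{N1..<N2}. Delta_abs a (int k))" by (subst sum.reindex) auto
  also have "\<dots> = (\<Sum>k\<in>{N1..<N2}. \<bar>a (int k) - a (int (Suc k))\<bar>)"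
    by (rule sum.cong) (use N1 in \<open>auto simp: Delta_abs_def add.commute\<close>)
  finally show ?thesis .
qed

lemma floor_pw: "n \<ge> 1 \<Longrightarrow> \<lfloor>2 powr (real n - 1)\<rfloor> = int (2^(n-1))"
proof -
  assume "n \<ge> 1"
  then have e: "real n - 1 = real (n-1)" by simp
  have "(2::real) powr (real (n-1)) = 2^(n-1)" by (rule powr_realpow) simp
  also have "(2::real)^(n-1) = real (2^(n-1))" by simp
  finally have "(2::real) powr (real n - 1) = real (2^(n-1))" unfolding e .
  then show ?thesis by (simp only: floor_of_nat)
qed

lemma floor_pw0: "\<lfloor>2 powr (real 0 - 1)\<rfloor> = (0::int)"
  by (simp add: powr_minus)



theorem mainTheorem12:
  fixes a :: "int \<Rightarrow> real"
  assumes "\<And>k. k \<le> 0 \<Longrightarrow> a k = 0"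
    and "GM (\<lambda>k. a (int k))"
    and "(\<lambda>k. a (int k)) \<longlonglongrightarrow> 0"
  shows "GM_bar a"
proof -
  note z = assms(1)
  define b where "b = (\<lambda>k. a (int k))"
  have b0: "b 0 = 0" unfolding b_def using z by simp
  from assms(2) obtain C L where C: "C > 0" and L: "L > 1"
    and gm0: "\<And>n. n \<ge> 1 \<Longrightarrow> (\<Sum>k=n..2*n. \<bar>b k - b (k+1)\<bar>)
       \<le> C / real n * (\<Sum>k\<in>{k. 1 \<le> k \<and> real n / L \<le> real k \<and> real k \<le> L * real n}. \<bar>b k\<bar>)"
    unfolding GM_def b_def by blast
  obtain P :: nat where P: "L < 2^P" using real_arch_pow[of 2 L] by auto
  obtain q :: nat where q: "2*C*(2*P+1)*4^P < 2^q" using real_arch_pow[of 2 "2*C*(2*P+1)*4^P"] by auto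
  have "convergent b" using assms(3) unfolding b_def convergent_def by blast
  then have "Bseq b" by (rule convergent_imp_Bseq)
  then obtain B where bnd: "\<And>k. \<bar>b k\<bar> \<le> B" unfolding Bseq_def by auto
  have gm: "(\<Sum>k\<in>{2^t..<2^(Suc t)}. \<bar>b k - b (Suc k)\<bar>)
              \<le> C / 2^t * (\<Sum>s\<in>{t-P..<t+P+1}. \<Sum>k\<in>{2^s..<2^(Suc s)}. \<bar>b k\<bar>)" for t
  proof -
    have n1: "(1::nat) \<le> 2^t" by simp
    let ?W = "{k. 1 \<le> k \<and> real (2^t) / L \<le> real k \<and> real k \<le> L * real (2^t)}"
    have h1: "(\<Sum>k\<in>{2^t..<2^(Suc t)}. \<bar>b k - b (Suc k)\<bar>) \<le> (\<Sum>k=2^t..2*2^t. \<bar>b k - b (Suc k)\<bar>)"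
      by (rule sum_mono2) auto
    have h2: "(\<Sum>k=2^t..2*2^t. \<bar>b k - b (Suc k)\<bar>) \<le> C / real (2^t) * (\<Sum>k\<in>?W. \<bar>b k\<bar>)" using gm0[OF n1] by simp
    have h3: "(\<Sum>k\<in>?W. \<bar>b k\<bar>) \<le> (\<Sum>k\<in>{2^(t-P)..<2^(t+P+1)}. \<bar>b k\<bar>)"
    proof (rule sum_mono2)
      show "?W \<subseteq> {2^(t-P)..<2^(t+P+1)}"
      proof
        fix k assume k: "k \<in> ?W"
        have "real k \<le> L * 2^t" using k by simp
        also have "\<dots> < 2^P * 2^t" using P by simp
        also have "\<dots> = 2^(t+P)" by (simp add: power_add)
        also have "\<dots> < 2^(t+P+1)" by simp
        finally have "real k < real (2^(t+P+1))" by simp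
        then have k1: "k < 2^(t+P+1)" by (simp only: of_nat_less_iff)
        have k2: "2^(t-P) \<le> k"
        proof (cases "P \<le> t")
          case True
          have "(2::real)^(t-P) * 2^P = 2^t" using True by (simp add: power_add[symmetric])
          then have "(2::real)^(t-P) = 2^t / 2^P" by (simp add: field_simps)
          also have "\<dots> \<le> 2^t / L" using P L by (intro divide_left_mono) auto
          also have "\<dots> \<le> real k" using k by simp
          finally have "real (2^(t-P)) \<le> real k" by simp
          then show ?thesis by (simp only: of_nat_le_iff)
        next
          case False
          then show ?thesis using k by simp
        qed
        show "k \<in> {2^(t-P)..<2^(t+P+1)}" using k1 k2 by simp
      qed
    qed auto
    have h4: "(\<Sum>k\<in>{2^(t-P)..<2^(t+P+1)}. \<bar>b k\<bar>) = (\<Sum>s\<in>{t-P..<t+P+1}. \<Sum>k\<in>{2^s..<2^(Suc s)}. \<bar>b k\<bar>)"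
      by (rule dyadic_decomp) simp
    have "C / real (2^t) * (\<Sum>k\<in>?W. \<bar>b k\<bar>) \<le> C / real (2^t) * (\<Sum>k\<in>{2^(t-P)..<2^(t+P+1)}. \<bar>b k\<bar>)"
      by (rule mult_left_mono[OF h3]) (use C in simp)
    then show ?thesis using h1 h2 h4 by simp
  qed
  define Cc where "Cc = C*(2*P+1)*4^P"
  define C' where "C' = max 2 (Cc*(12*2^q*8))"
  have C'pos: "C' > 0" unfolding C'_def by simp
  have Cc0: "0 \<le> Cc" unfolding Cc_def using C by simp
  have key: "(\<Sum>m\<in>{m::int. \<lfloor>2 powr (real n - 1)\<rfloor> \<le> \<bar>m\<bar> \<and> \<bar>m\<bar> < 2^n}. Delta_abs a m) \<le> C' * Qv"
    if HQ: "\<And>k. min 1 (2 powr (real k - real n)) * hat_a a k \<le> Qv" for n Qv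
  proof -
    have "0 \<le> min 1 (2 powr (real 0 - real n)) * hat_a a 0"
      using hat_nonneg[of a 0] by simp
    then have Q0: "0 \<le> Qv" using HQ[of 0] by linarith
    show ?thesis
    proof (cases "n = 0")
      case True
      have set0: "{m::int. \<lfloor>2 powr (real n - 1)\<rfloor> \<le> \<bar>m\<bar> \<and> \<bar>m\<bar> < 2^n} = {0}"
        unfolding True floor_pw0 by auto
      have d0: "Delta_abs a 0 = \<bar>a 1\<bar>" unfolding Delta_abs_def using z[of 0] z[of "-1"] by simp
      have "\<bar>partial_sum a (int 1)\<bar> / (real_of_int \<bar>int 1\<bar> + 1) \<le> hat_a a 0"
        by (rule hat_lower) auto
      moreover have "partial_sum a (int 1) = a 0 + a 1" using ps_eq[of a 1] by (simp add: numeral_2_eq_2)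
      ultimately have "\<bar>a 1\<bar> / 2 \<le> hat_a a 0" using z[of 0] by simp
      moreover have "hat_a a 0 \<le> Qv" using HQ[of 0] True by simp
      ultimately have "\<bar>a 1\<bar> \<le> 2 * Qv" by simp
      also have "\<dots> \<le> C' * Qv" unfolding C'_def by (rule mult_right_mono) (use Q0 in auto)
      finally show ?thesis unfolding set0 using d0 by simp
    next
      case False
      define t0 where "t0 = n - 1"
      have nt: "n = Suc t0" unfolding t0_def using False by simp
      have seteq: "{m::int. \<lfloor>2 powr (real n - 1)\<rfloor> \<le> \<bar>m\<bar> \<and> \<bar>m\<bar> < 2^n}
          = {m::int. int (2^t0) \<le> \<bar>m\<bar> \<and> \<bar>m\<bar> < int (2^(Suc t0))}"
        using floor_pw[of n] False unfolding t0_def[symmetric] nt[symmetric] by simp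
      have N1: "(1::nat) \<le> 2^t0" by simp
      have conv: "(\<Sum>m\<in>{m::int. \<lfloor>2 powr (real n - 1)\<rfloor> \<le> \<bar>m\<bar> \<and> \<bar>m\<bar> < 2^n}. Delta_abs a m)
          = (\<Sum>k\<in>{2^t0..<2^(Suc t0)}. \<bar>b k - b (Suc k)\<bar>)"
        unfolding seteq b_def by (rule target_conv[OF z N1])
      have Tb: "\<bar>\<Sum>j<m. b j\<bar> \<le> (8*Qv) * (real m + 2^t0)" for m
      proof (cases m)
        case 0 then show ?thesis using Q0 by simp
      next
        case (Suc m')
        have psm: "(\<Sum>j<m. b j) = partial_sum a (int m')" unfolding Suc b_def by (simp add: ps_eq)
        have rhs0: "0 \<le> (8*Qv) * (real m + 2^t0)" using Q0 by simp
        show ?thesis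
        proof (cases "m' = 0")
          case True
          then show ?thesis using rhs0 b0 unfolding Suc by simp
        next
          case False
          then have m1: "m' \<ge> 1" by simp
          obtain k where k1: "2^k \<le> m'" and k2: "m' < 2^(k+1)" using ex_power_ivl1[of 2 m'] m1 by auto
          have ik1: "2^k \<le> \<bar>int m'\<bar>" using k1
            by (metis abs_of_nat of_nat_le_iff of_nat_numeral of_nat_power)
          have ik2: "\<bar>int m'\<bar> < 2^(k+1)" using k2
            by (metis abs_of_nat of_nat_less_iff of_nat_numeral of_nat_power)
          have hl: "\<bar>partial_sum a (int m')\<bar> / (real_of_int \<bar>int m'\<bar> + 1) \<le> hat_a a k"
            by (rule hat_lower[OF ik1 ik2])
          then have hl2: "\<bar>partial_sum a (int m')\<bar> \<le> (real m' + 1) * hat_a a k"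
            by (simp add: pos_divide_le_eq mult.commute)
          have hn: "0 \<le> hat_a a k" by (rule hat_nonneg)
          have mreal: "real m = real m' + 1" unfolding Suc by simp
          show ?thesis
          proof (cases "n \<le> k")
            case True
            have "1 \<le> (2::real) powr (real k - real n)" by (rule ge_one_powr_ge_zero) (use True in auto)
            then have "hat_a a k \<le> Qv" using HQ[of k] by simp
            then have "(real m' + 1) * hat_a a k \<le> (real m' + 1) * Qv" by (rule mult_left_mono) simp
            also have "\<dots> \<le> (8*Qv) * (real m + 2^t0)" using Q0 unfolding mreal
              by (simp add: algebra_simps)
            finally show ?thesis using hl2 psm by simp
          next
            case False
            have "(2::real) powr (real k - real n) \<le> 2 powr 0" by (rule powr_mono) (use False in auto)
            then have le1: "(2::real) powr (real k - real n) \<le> 1" by simp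
            then have hk: "2 powr (real k - real n) * hat_a a k \<le> Qv" using HQ[of k] by simp
            have "real m' + 1 \<le> 2^(k+1)"
            proof -
              have "m' + 1 \<le> 2^(k+1)" using k2 by simp
              then have "real (m' + 1) \<le> real (2^(k+1))" by (simp only: of_nat_le_iff)
              then show ?thesis by simp
            qed
            then have "(real m' + 1) * hat_a a k \<le> 2^(k+1) * hat_a a k" by (rule mult_right_mono) (rule hn)
            also have "(2::real)^(k+1) = 4 * 2^t0 * 2 powr (real k - real n)"
            proof -
              have "(2::real)^(k+1) = 2 powr (real (k+1))" by (rule powr_realpow[symmetric]) simp
              also have "real (k+1) = real (n+1) + (real k - real n)" by simp
              also have "(2::real) powr (real (n+1) + (real k - real n)) = 2 powr (real (n+1)) * 2 powr (real k - real n)"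
                by (rule powr_add)
              also have "(2::real) powr (real (n+1)) = 2^(n+1)" by (rule powr_realpow) simp
              also have "(2::real)^(n+1) = 4 * 2^t0" unfolding nt by simp
              finally show ?thesis .
            qed
            also have "4 * 2^t0 * 2 powr (real k - real n) * hat_a a k \<le> 4 * 2^t0 * Qv"
              using hk by (simp add: mult.assoc)
            also have "\<dots> \<le> (8*Qv) * (real m + 2^t0)" using Q0 by (simp add: algebra_simps)
            finally show ?thesis using hl2 psm by simp
          qed
        qed
      qed
      have qa: "2*C*(2*P+1)*4^P \<le> 2^q" using q by simp
      have C0: "0 \<le> C" using C by simp
      have Tb': "\<bar>\<Sum>j<m. b j\<bar> \<le> (8*Qv) * real (m + 2^t0)" for m using Tb[of m] by simp
      have cr: "(\<Sum>k\<in>{2^t0..<2^(Suc t0)}. \<bar>b k - b (Suc k)\<bar>) \<le> C*(2*P+1)*4^P * (12 * 2^q * (8*Qv))"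
        by (rule core[OF bnd gm C0 qa Tb'])
      have e: "C*(2*P+1)*4^P * (12 * 2^q * (8*Qv)) = (Cc*(12*2^q*8)) * Qv" unfolding Cc_def by simp
      have f: "(Cc*(12*2^q*8)) * Qv \<le> C' * Qv" unfolding C'_def by (rule mult_right_mono) (use Q0 in auto)
      show ?thesis unfolding conv using cr e f by linarith
    qed
  qed
  show ?thesis unfolding GM_bar_def
  proof (intro exI[of _ C'] conjI allI)
    show "0 < C'" by (rule C'pos)
  next
    fix n :: nat
    define F where "F k = min 1 (2 powr (real k - real n)) * hat_a a k" for k :: nat
    let ?T = "(\<Sum>m\<in>{m::int. \<lfloor>2 powr (real n - 1)\<rfloor> \<le> \<bar>m\<bar> \<and> \<bar>m\<bar> < 2^n}. Delta_abs a m)"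
    have "ereal ?T \<le> ereal C' * (SUP k. ereal (F k))"
    proof (cases "(SUP k. ereal (F k))" rule: ereal_cases)
      case (real r)
      have "ereal (F k) \<le> ereal r" for k using real by (metis SUP_upper UNIV_I)
      then have "F k \<le> r" for k by simp
      then have "?T \<le> C' * r" by (intro key) (simp add: F_def)
      then show ?thesis using real by simp
    next
      case PInf
      then show ?thesis using C'pos by simp
    next
      case MInf
      have "ereal (F 0) \<le> (SUP k. ereal (F k))" by (rule SUP_upper) simp
      then show ?thesis using MInf by simp
    qed
    then show "ereal ?T \<le> ereal C' * (SUP k. ereal (min 1 (2 powr (real k - real n)) * hat_a a k))"
      unfolding F_def .
  qed
qed

end
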